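(* The Mixing method $M_\theta$ with a step size $\theta\in\left(0,\frac{1}{\max_i\|c_i\|_1}\right)$ is a diffeomorphism.
   Context: Let $C\in\mathbb{R}^{n\times n}$ be symmetric with columns $c_i$ and $c_{ii}=0$; $\|\cdot\|_1$ is the $1$-norm and $\|\cdot\|$ the Euclidean norm. $M_\theta$ maps $V\in\mathbb{R}^{k\times n}$ with unit-norm columns to the result of one cyclic pass: for $i=1,\ldots,n$ in order, $v_i:=(v_i-\theta Vc_i)/\|v_i-\theta Vc_i\|$, where $V$ contains the most recent columns. The map is considered on the product of unit spheres. *)

theory Defs
  imports "HOL-Analysis.Analysis"
begin

coinductive smooth_on :: "'a::real_normed_vector set \<Rightarrow> ('a \<Rightarrow> 'b::real_normed_vector) \<Rightarrow> bool" where
  "open U \<Longrightarrow> f differentiable_on U \<Longrightarrow>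
   (\<forall>v. smooth_on U (\<lambda>x. frechet_derivative f (at x) v)) \<Longrightarrow> smooth_on U f"

definition smooth_map_on :: "'a::euclidean_space set \<Rightarrow> ('a \<Rightarrow> 'b::euclidean_space) \<Rightarrow> bool" where
  "smooth_map_on S f \<longleftrightarrow>
     (\<forall>x\<in>S. \<exists>U g. open U \<and> x \<in> U \<and> smooth_on U g \<and> (\<forall>y\<in>S \<inter> U. g y = f y))"

definition diffeomorphism_on :: "'a::euclidean_space set \<Rightarrow> ('a \<Rightarrow> 'a) \<Rightarrow> bool" where
  "diffeomorphism_on S f \<longleftrightarrow>
     bij_betw f S S \<and> smooth_map_on S f \<and> smooth_map_on S (inv_into S f)"

text \<open>Matrices V in R^(k x n) have type real^n^k; V $ r $ i is the entry (r,i);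
  the columns are indexed by the finite linearly ordered type 'n.\<close>

definition col :: "real^'n^'k \<Rightarrow> 'n \<Rightarrow> real^'k" where
  "col V i = (\<chi> r. V $ r $ i)"

definition set_col :: "real^'n^'k \<Rightarrow> 'n \<Rightarrow> real^'k \<Rightarrow> real^'n^'k" where
  "set_col V i w = (\<chi> r. \<chi> j. if j = i then w $ r else V $ r $ j)"

definition sphere_prod :: "(real^'n^'k) set" where
  "sphere_prod = {V. \<forall>i. norm (col V i) = 1}"

definition mix_update :: "real \<Rightarrow> real^'n^'n \<Rightarrow> 'n \<Rightarrow> real^'n^'k \<Rightarrow> real^'n^'k" where
  "mix_update \<theta> C i V =
     (let w = col V i - \<theta> *\<^sub>R (V *v col C i) in set_col V i (w /\<^sub>R norm w))"

definition mixing :: "real \<Rightarrow> real^('n::{finite,linorder})^('n::{finite,linorder}) \<Rightarrow> real^('n::{finite,linorder})^'k \<Rightarrow> real^('n::{finite,linorder})^'k" where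
  "mixing \<theta> C V = fold (mix_update \<theta> C) (sorted_list_of_set (UNIV :: ('n::{finite,linorder}) set)) V"

definition col_norm1 :: "real^'n^'n \<Rightarrow> 'n \<Rightarrow> real" where
  "col_norm1 C i = (\<Sum>j\<in>UNIV. \<bar>C $ j $ i\<bar>)"

end

theory Submission
  imports Defs
begin


inductive exr :: "'a::real_normed_vector set \<Rightarrow> ('a \<Rightarrow> real) \<Rightarrow> bool" for U where
  exr_const: "exr U (\<lambda>x. c)"
| exr_lin: "bounded_linear l \<Longrightarrow> exr U l"
| exr_add: "exr U f \<Longrightarrow> exr U g \<Longrightarrow> exr U (\<lambda>x. f x + g x)"
| exr_mult: "exr U f \<Longrightarrow> exr U g \<Longrightarrow> exr U (\<lambda>x. f x * g x)"
| exr_inv: "exr U f \<Longrightarrow> (\<forall>x\<in>U. f x \<noteq> 0) \<Longrightarrow> exr U (\<lambda>x. inverse (f x))"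
| exr_sqrt: "exr U f \<Longrightarrow> (\<forall>x\<in>U. 0 < f x) \<Longrightarrow> exr U (\<lambda>x. sqrt (f x))"

lemma exr_cmult: "exr U f \<Longrightarrow> exr U (\<lambda>x. c * f x)"
  using exr_mult[OF exr_const] by blast

lemma exr_diff: "exr U f \<Longrightarrow> exr U g \<Longrightarrow> exr U (\<lambda>x. f x - g x)"
proof -
  assume "exr U f" "exr U g"
  then have "exr U (\<lambda>x. f x + (-1) * g x)" by (intro exr_add exr_cmult)
  then show ?thesis by simp
qed

lemma exr_sum: "finite A \<Longrightarrow> (\<And>a. a \<in> A \<Longrightarrow> exr U (f a)) \<Longrightarrow> exr U (\<lambda>x. \<Sum>a\<in>A. f a x)"
proof (induction A rule: finite_induct)
  case empty then show ?case using exr_const[of U 0] by simp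
next
  case (insert a A) then show ?case by (simp add: exr_add)
qed

lemma exr_mono: "exr U f \<Longrightarrow> U' \<subseteq> U \<Longrightarrow> exr U' f"
  by (induction rule: exr.induct) (auto intro: exr.intros)

lemma exr_deriv: "exr U f \<Longrightarrow> \<exists>f'. (\<forall>x\<in>U. (f has_derivative f' x) (at x)) \<and> (\<forall>v. exr U (\<lambda>x. f' x v))"
proof (induction rule: exr.induct)
  case (exr_const c)
  show ?case by (rule exI[of _ "\<lambda>x v. 0"]) (auto intro: exr.intros)
next
  case (exr_lin l)
  show ?case by (rule exI[of _ "\<lambda>x. l"]) (auto intro: exr.intros bounded_linear_imp_has_derivative exr_lin)
next
  case (exr_add f g)
  then obtain f' g' where "\<forall>x\<in>U. (f has_derivative f' x) (at x)" "\<forall>v. exr U (\<lambda>x. f' x v)"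
    "\<forall>x\<in>U. (g has_derivative g' x) (at x)" "\<forall>v. exr U (\<lambda>x. g' x v)" by blast
  then show ?case
    by (intro exI[of _ "\<lambda>x v. f' x v + g' x v"]) (auto intro: exr.intros has_derivative_add)
next
  case (exr_mult f g)
  note hf = \<open>exr U f\<close> \<open>exr U g\<close>
  from exr_mult obtain f' g' where d: "\<forall>x\<in>U. (f has_derivative f' x) (at x)" and e1: "\<And>v. exr U (\<lambda>x. f' x v)"
    and d2: "\<forall>x\<in>U. (g has_derivative g' x) (at x)" and e2: "\<And>v. exr U (\<lambda>x. g' x v)" by blast
  have "exr U (\<lambda>x. f x * g' x v + f' x v * g x)" for v
    by (rule exr.exr_add; rule exr.exr_mult) (use hf e1 e2 in auto)
  then show ?case using d d2
    by (intro exI[of _ "\<lambda>x v. f x * g' x v + f' x v * g x"]) (auto intro!: has_derivative_mult)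
next
  case (exr_inv f)
  note hf = \<open>exr U f\<close>
  from exr_inv obtain f' where d: "\<forall>x\<in>U. (f has_derivative f' x) (at x)" and e: "\<And>v. exr U (\<lambda>x. f' x v)" by blast
  have hi: "exr U (\<lambda>x. inverse (f x))" using hf exr_inv.hyps(2) by (rule exr.exr_inv)
  have "exr U (\<lambda>x. (-1) * (inverse (f x) * f' x v * inverse (f x)))" for v
    by (rule exr_cmult; rule exr.exr_mult; (rule exr.exr_mult)?) (use hi e in auto)
  then have "exr U (\<lambda>x. - (inverse (f x) * f' x v * inverse (f x)))" for v by simp
  then show ?case using d exr_inv.hyps(2)
    by (intro exI[of _ "\<lambda>x v. - (inverse (f x) * f' x v * inverse (f x))"]) (auto intro!: has_derivative_inverse)
next
  case (exr_sqrt f)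
  note hf = \<open>exr U f\<close>
  from exr_sqrt obtain f' where d: "\<forall>x\<in>U. (f has_derivative f' x) (at x)" and e: "\<And>v. exr U (\<lambda>x. f' x v)" by blast
  have hs: "exr U (\<lambda>x. sqrt (f x))" using hf exr_sqrt.hyps(2) by (rule exr.exr_sqrt)
  have hi: "exr U (\<lambda>x. inverse (sqrt (f x)))" using hs by (rule exr.exr_inv) (use exr_sqrt.hyps(2) in auto)
  have "exr U (\<lambda>x. f' x v * (inverse (sqrt (f x)) * (1/2)))" for v
    by (rule exr.exr_mult; (rule exr.exr_mult)?; (rule exr.exr_const)?) (use hi e in auto)
  then show ?case using d exr_sqrt.hyps(2)
    apply (intro exI[of _ "\<lambda>x v. f' x v * (inverse (sqrt (f x)) * (1/2))"])
    apply auto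
    subgoal for x
      using has_derivative_real_sqrt[OF _ d[rule_format, of x]] by (simp add: mult.assoc)
    done
qed

definition Rsm :: "'a::real_normed_vector set \<Rightarrow> ('a \<Rightarrow> 'b::euclidean_space) \<Rightarrow> bool" where
  "Rsm U f \<longleftrightarrow> open U \<and> (\<forall>b\<in>Basis. \<exists>g. exr U g \<and> (\<forall>x\<in>U. f x \<bullet> b = g x))"

lemma Rsm_step:
  fixes f :: "'a::real_normed_vector \<Rightarrow> 'b::euclidean_space"
  assumes "Rsm U f"
  shows "open U \<and> f differentiable_on U \<and> (\<forall>v. Rsm U (\<lambda>x. frechet_derivative f (at x) v))"
proof -
  have U: "open U" using assms Rsm_def by blast
  from assms obtain G where G: "\<forall>b\<in>Basis. exr U (G b) \<and> (\<forall>x\<in>U. f x \<bullet> b = G b x)"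
    unfolding Rsm_def by metis
  have "\<forall>b\<in>Basis. \<exists>g'. (\<forall>x\<in>U. (G b has_derivative g' x) (at x)) \<and> (\<forall>v. exr U (\<lambda>x. g' x v))"
    using G exr_deriv by blast
  then obtain G' where G': "\<forall>b\<in>Basis. (\<forall>x\<in>U. (G b has_derivative G' b x) (at x)) \<and> (\<forall>v. exr U (\<lambda>x. G' b x v))"
    by metis
  have D: "(f has_derivative (\<lambda>v. \<Sum>b\<in>Basis. G' b x v *\<^sub>R b)) (at x)" if x: "x \<in> U" for x
  proof -
    have c: "((\<lambda>y. f y \<bullet> b) has_derivative G' b x) (at x)" if b: "b \<in> Basis" for b
      by (rule has_derivative_transform_within_open[OF _ U x, of "G b"]) (use G G' b x in auto)
    have "((\<lambda>y. \<Sum>b\<in>Basis. (f y \<bullet> b) *\<^sub>R b) has_derivative (\<lambda>v. \<Sum>b\<in>Basis. G' b x v *\<^sub>R b)) (at x)"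
      by (intro has_derivative_sum has_derivative_scaleR_left c)
    then show ?thesis by (simp add: euclidean_representation)
  qed
  have diff: "f differentiable_on U"
    by (rule differentiable_at_imp_differentiable_on) (use D differentiable_def in blast)
  have "Rsm U (\<lambda>x. frechet_derivative f (at x) v)" for v
    unfolding Rsm_def
  proof (intro conjI U ballI)
    fix b :: 'b assume b: "b \<in> Basis"
    show "\<exists>g. exr U g \<and> (\<forall>x\<in>U. frechet_derivative f (at x) v \<bullet> b = g x)"
    proof (intro exI conjI ballI)
      show "exr U (\<lambda>x. G' b x v)" using G' b by blast
      fix x assume x: "x \<in> U"
      have "frechet_derivative f (at x) = (\<lambda>v. \<Sum>b\<in>Basis. G' b x v *\<^sub>R b)"
        using frechet_derivative_at[OF D[OF x]] by simp
      then show "frechet_derivative f (at x) v \<bullet> b = G' b x v" using b by simp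
    qed
  qed
  then show ?thesis using U diff by blast
qed

lemma Rsm_smooth: "Rsm U f \<Longrightarrow> smooth_on U f"
  by (rule smooth_on.coinduct[of Rsm]) (use Rsm_step in blast)+

lemma exr_smooth:
  fixes f :: "'a::real_normed_vector \<Rightarrow> 'b::euclidean_space"
  assumes "open U" "\<forall>b\<in>Basis. exr U (\<lambda>x. f x \<bullet> b)"
  shows "smooth_on U f"
  by (rule Rsm_smooth) (use assms in \<open>auto simp: Rsm_def\<close>)

lemma exr_cont: "exr U f \<Longrightarrow> continuous_on U f"
  by (metis exr_deriv has_derivative_continuous continuous_at_imp_continuous_on)

lemma exr_subst:
  fixes F :: "'a::real_normed_vector \<Rightarrow> 'b::euclidean_space"
  assumes "exr V h" "\<forall>b\<in>Basis. exr W (\<lambda>x. F x \<bullet> b)" "F ` W \<subseteq> V"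
  shows "exr W (\<lambda>x. h (F x))"
  using assms
proof (induction rule: exr.induct)
  case (exr_const c) show ?case by (rule exr.exr_const)
next
  case (exr_lin l)
  have "l (F x) = (\<Sum>b\<in>Basis. (F x \<bullet> b) * l b)" for x
  proof -
    have "l (F x) = l (\<Sum>b\<in>Basis. (F x \<bullet> b) *\<^sub>R b)" by (simp add: euclidean_representation)
    also have "\<dots> = (\<Sum>b\<in>Basis. (F x \<bullet> b) * l b)"
      using bounded_linear.linear[OF exr_lin.hyps] by (simp add: linear_sum linear_cmul)
    finally show ?thesis .
  qed
  moreover have "exr W (\<lambda>x. \<Sum>b\<in>Basis. (F x \<bullet> b) * l b)"
    by (rule exr_sum) (use exr_lin.prems in \<open>auto intro!: exr.exr_mult exr.exr_const\<close>)
  ultimately show ?case by simp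
next
  case (exr_add f g) then show ?case by (auto intro: exr.exr_add)
next
  case (exr_mult f g) then show ?case by (auto intro: exr.exr_mult)
next
  case (exr_inv f) then show ?case by (auto intro!: exr.exr_inv)
next
  case (exr_sqrt f) then show ?case by (auto intro!: exr.exr_sqrt)
qed

definition LP :: "'a::euclidean_space set \<Rightarrow> ('a \<Rightarrow> 'b::euclidean_space) \<Rightarrow> bool" where
  "LP S F \<longleftrightarrow> (\<forall>x\<in>S. \<exists>W. open W \<and> x \<in> W \<and> (\<forall>b\<in>Basis. exr W (\<lambda>y. F y \<bullet> b)))"

definition SG :: "'a::euclidean_space set \<Rightarrow> ('a \<Rightarrow> 'a) \<Rightarrow> bool" where
  "SG S f \<longleftrightarrow> (\<exists>p. exr UNIV p \<and> (\<forall>x\<in>S. 0 < p x) \<and> (\<forall>b\<in>Basis. exr {x. 0 < p x} (\<lambda>y. f y \<bullet> b)))"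

lemma LP_id: "LP S (\<lambda>x. x)"
  unfolding LP_def by (auto intro!: exI[of _ UNIV] exr.exr_lin bounded_linear_inner_left)

lemma LP_comp:
  assumes "LP S F" "F ` S \<subseteq> S" "SG S f"
  shows "LP S (\<lambda>x. f (F x))"
  unfolding LP_def
proof
  fix x assume x: "x \<in> S"
  obtain W where W: "open W" "x \<in> W" "\<forall>b\<in>Basis. exr W (\<lambda>y. F y \<bullet> b)"
    using assms(1) x unfolding LP_def by blast
  obtain p where p: "exr UNIV p" "\<forall>x\<in>S. 0 < p x" "\<forall>b\<in>Basis. exr {x. 0 < p x} (\<lambda>y. f y \<bullet> b)"
    using assms(3) unfolding SG_def by blast
  have pe: "exr W (\<lambda>y. p (F y))" by (rule exr_subst[OF p(1) W(3)]) auto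
  define W' where "W' = (\<lambda>y. p (F y)) -` {0<..} \<inter> W"
  have "open W'" unfolding W'_def
    using exr_cont[OF pe] W(1) continuous_on_open_vimage open_greaterThan by blast
  moreover have "x \<in> W'" unfolding W'_def using W(2) x assms(2) p(2) by auto
  moreover have "\<forall>b\<in>Basis. exr W' (\<lambda>y. f (F y) \<bullet> b)"
  proof
    fix b :: 'a assume b: "b \<in> Basis"
    show "exr W' (\<lambda>y. f (F y) \<bullet> b)"
      by (rule exr_subst[OF p(3)[rule_format, OF b], of W' F])
        (use W(3) exr_mono[of W _ W'] in \<open>auto simp: W'_def\<close>)
  qed
  ultimately show "\<exists>W. open W \<and> x \<in> W \<and> (\<forall>b\<in>Basis. exr W (\<lambda>y. f (F y) \<bullet> b))" by blast
qed

lemma LP_fold: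
  assumes "\<And>i. SG S (f i)" "\<And>i. f i ` S \<subseteq> S"
  shows "LP S G \<Longrightarrow> G ` S \<subseteq> S \<Longrightarrow> LP S (\<lambda>x. fold f xs (G x)) \<and> (\<lambda>x. fold f xs (G x)) ` S \<subseteq> S"
proof (induction xs arbitrary: G)
  case Nil then show ?case by simp
next
  case (Cons a xs)
  have "LP S (\<lambda>x. f a (G x))" by (rule LP_comp[OF Cons.prems assms(1)])
  moreover have "(\<lambda>x. f a (G x)) ` S \<subseteq> S" using Cons.prems(2) assms(2) by blast
  ultimately show ?case using Cons.IH[of "\<lambda>x. f a (G x)"] by simp
qed

lemma LP_smooth_map:
  fixes F :: "'a::euclidean_space \<Rightarrow> 'b::euclidean_space"
  assumes "LP S F" "\<forall>x\<in>S. g x = F x"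
  shows "smooth_map_on S g"
  unfolding smooth_map_on_def
proof
  fix x assume "x \<in> S"
  then obtain W where W: "open W" "x \<in> W" "\<forall>b\<in>Basis. exr W (\<lambda>y. F y \<bullet> b)"
    using assms(1) unfolding LP_def by blast
  then show "\<exists>U g'. open U \<and> x \<in> U \<and> smooth_on U g' \<and> (\<forall>y\<in>S \<inter> U. g' y = g y)"
    using exr_smooth[OF W(1) W(3)] assms(2) by (intro exI[of _ W] exI[of _ F]) auto
qed

lemma fold_in:
  assumes "\<And>i. h i ` S \<subseteq> S"
  shows "x \<in> S \<Longrightarrow> fold h xs x \<in> S"
  using assms by (induction xs arbitrary: x) auto

lemma fold_inv:
  assumes "\<And>i. f i ` S \<subseteq> S" "\<And>i. g i ` S \<subseteq> S"
    "\<And>i x. x \<in> S \<Longrightarrow> g i (f i x) = x" "\<And>i x. x \<in> S \<Longrightarrow> f i (g i x) = x"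
  shows "x \<in> S \<Longrightarrow> fold g (rev xs) (fold f xs x) = x \<and> fold f xs (fold g (rev xs) x) = x"
proof (induction xs arbitrary: x)
  case Nil then show ?case by simp
next
  case (Cons a xs)
  have fa: "f a x \<in> S" using Cons.prems assms(1) by blast
  have gs: "fold g (rev xs) x \<in> S" by (rule fold_in[OF assms(2) Cons.prems])
  show ?case using Cons.IH[OF fa] Cons.IH[OF Cons.prems] assms(3)[OF Cons.prems] assms(4)[OF gs] by simp
qed



definition aa :: "real \<Rightarrow> real^'n^'n \<Rightarrow> 'n \<Rightarrow> real^'n^'k \<Rightarrow> real^'k" where
  "aa \<theta> C i V = \<theta> *\<^sub>R (V *v col C i)"

definition ww :: "real \<Rightarrow> real^'n^'n \<Rightarrow> 'n \<Rightarrow> real^'n^'k \<Rightarrow> real^'k" where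
  "ww \<theta> C i V = col V i - aa \<theta> C i V"

definition tt :: "real \<Rightarrow> real^'n^'n \<Rightarrow> 'n \<Rightarrow> real^'n^'k \<Rightarrow> real" where
  "tt \<theta> C i V = - (aa \<theta> C i V \<bullet> col V i)
     + sqrt ((aa \<theta> C i V \<bullet> col V i)^2 + 1 - aa \<theta> C i V \<bullet> aa \<theta> C i V)"

definition invstep :: "real \<Rightarrow> real^'n^'n \<Rightarrow> 'n \<Rightarrow> real^'n^'k \<Rightarrow> real^'n^'k" where
  "invstep \<theta> C i V = set_col V i (aa \<theta> C i V + tt \<theta> C i V *\<^sub>R col V i)"

lemma col_nth[simp]: "col V i $ r = V $ r $ i"
  by (simp add: col_def)

lemma set_col_nth[simp]: "set_col V i z $ r $ j = (if j = i then z $ r else V $ r $ j)"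
  by (simp add: set_col_def)

lemma col_set_col: "col (set_col V i z) j = (if j = i then z else col V j)"
  by (simp add: vec_eq_iff)

lemma set_col_col[simp]: "set_col V i (col V i) = V"
  by (simp add: vec_eq_iff)

lemma set_col_set_col[simp]: "set_col (set_col V i z) i z' = set_col V i z'"
  by (simp add: vec_eq_iff)

lemma aa_nth: "aa \<theta> C i V $ r = \<theta> * (\<Sum>j\<in>UNIV. V $ r $ j * C $ j $ i)"
  by (simp add: aa_def matrix_vector_mult_def)

lemma aa_set_col:
  assumes "C $ i $ i = 0"
  shows "aa \<theta> C i (set_col V i z) = aa \<theta> C i V"
  unfolding vec_eq_iff aa_nth
  by (auto intro!: sum.cong arg_cong[where f="\<lambda>x. \<theta> * x"] simp: assms)

lemma mix_update_eq: "mix_update \<theta> C i V = set_col V i (ww \<theta> C i V /\<^sub>R norm (ww \<theta> C i V))"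
  by (simp add: mix_update_def ww_def aa_def Let_def)

lemma in_sphere_set_col:
  "V \<in> sphere_prod \<Longrightarrow> norm z = 1 \<Longrightarrow> set_col V i z \<in> sphere_prod"
  by (auto simp: sphere_prod_def col_set_col)

lemma exr_entry: "exr U (\<lambda>V::real^'n^'k. V $ r $ j)"
  by (rule exr.exr_lin) (rule bounded_linear_compose[OF bounded_linear_vec_nth bounded_linear_vec_nth])

lemma exr_aa: "exr U (\<lambda>V. aa \<theta> C i V $ r)"
  unfolding aa_nth by (intro exr_cmult exr_sum exr.exr_mult exr_entry exr.exr_const) auto

lemma exr_ww: "exr U (\<lambda>V. ww \<theta> C i V $ r)"
  unfolding ww_def by (simp add: exr_diff exr_aa exr_entry)

lemma vec_comp_exr:
  fixes F :: "'a::real_normed_vector \<Rightarrow> real^'n^'k"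
  assumes "\<And>r j. exr W (\<lambda>y. F y $ r $ j)"
  shows "\<forall>b\<in>Basis. exr W (\<lambda>y. F y \<bullet> b)"
proof
  fix b :: "real^'n^'k" assume "b \<in> Basis"
  then obtain r j where b: "b = axis r (axis j 1)"
    by (auto simp: Basis_vec_def)
  have "(\<lambda>y. F y \<bullet> b) = (\<lambda>y. F y $ r $ j)"
    by (simp add: b inner_axis)
  then show "exr W (\<lambda>y. F y \<bullet> b)" using assms by simp
qed

lemma norm_vec_sqrt: "norm (x::real^'k) = sqrt (\<Sum>r\<in>UNIV. x $ r * x $ r)"
  by (simp add: norm_eq_sqrt_inner inner_vec_def)

lemma aa_sum: "aa \<theta> C i V = \<theta> *\<^sub>R (\<Sum>j\<in>UNIV. C $ j $ i *\<^sub>R col V j)"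
  unfolding aa_def matrix_mult_sum by (simp add: column_def col_def scalar_mult_eq_scaleR)

lemma aa_norm:
  fixes C :: "real^'n^'n" and V :: "real^'n^'k"
  assumes "0 < \<theta>" "\<theta> * Max (range (col_norm1 C)) < 1" "V \<in> sphere_prod"
  shows "norm (aa \<theta> C i V) < 1"
proof -
  have "norm (\<Sum>j\<in>UNIV. C $ j $ i *\<^sub>R col V j) \<le> (\<Sum>j\<in>UNIV. norm (C $ j $ i *\<^sub>R col V j))"
    by (rule norm_sum)
  also have "\<dots> = col_norm1 C i" using assms(3) by (simp add: col_norm1_def sphere_prod_def)
  also have "\<dots> \<le> Max (range (col_norm1 C))" by (rule Max_ge) auto
  finally have "norm (\<Sum>j\<in>UNIV. C $ j $ i *\<^sub>R col V j) \<le> Max (range (col_norm1 C))" .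
  then have "\<theta> * norm (\<Sum>j\<in>UNIV. C $ j $ i *\<^sub>R col V j) \<le> \<theta> * Max (range (col_norm1 C))"
    using assms(1) by (simp add: mult_left_mono)
  moreover have "norm (aa \<theta> C i V) = \<theta> * norm (\<Sum>j\<in>UNIV. C $ j $ i *\<^sub>R col V j)"
    using assms(1) by (simp add: aa_sum)
  ultimately show ?thesis using assms(2) by linarith
qed

lemma ww_nonzero:
  fixes C :: "real^'n^'n" and V :: "real^'n^'k"
  assumes "0 < \<theta>" "\<theta> * Max (range (col_norm1 C)) < 1" "V \<in> sphere_prod"
  shows "ww \<theta> C i V \<noteq> 0"
proof
  assume "ww \<theta> C i V = 0"
  then have "col V i = aa \<theta> C i V" by (simp add: ww_def)
  moreover have "norm (col V i) = 1" using assms(3) by (simp add: sphere_prod_def)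
  ultimately show False using aa_norm[OF assms, of i] by simp
qed

lemma mix_in:
  fixes C :: "real^'n^'n" and V :: "real^'n^'k"
  assumes "0 < \<theta>" "\<theta> * Max (range (col_norm1 C)) < 1" "V \<in> sphere_prod"
  shows "mix_update \<theta> C i V \<in> sphere_prod"
  unfolding mix_update_eq
  by (rule in_sphere_set_col[OF assms(3)]) (use ww_nonzero[OF assms] in simp)

lemma SG_mix:
  fixes C :: "real^'n^'n"
  assumes "0 < \<theta>" "\<theta> * Max (range (col_norm1 C)) < 1"
  shows "SG (sphere_prod :: (real^'n^'k) set) (mix_update \<theta> C i)"
  unfolding SG_def
proof (intro exI conjI)
  define p where "p = (\<lambda>V::real^'n^'k. \<Sum>r\<in>UNIV. ww \<theta> C i V $ r * ww \<theta> C i V $ r)"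
  show pe: "exr UNIV p" unfolding p_def by (intro exr_sum exr.exr_mult exr_ww) auto
  show "\<forall>x\<in>sphere_prod. 0 < p x"
  proof
    fix V :: "real^'n^'k" assume V: "V \<in> sphere_prod"
    have "p V = ww \<theta> C i V \<bullet> ww \<theta> C i V" by (simp add: p_def inner_vec_def)
    then show "0 < p V" using ww_nonzero[OF assms V] by simp
  qed
  show "\<forall>b\<in>Basis. exr {x. 0 < p x} (\<lambda>y. mix_update \<theta> C i y \<bullet> b)"
  proof (rule vec_comp_exr)
    fix r j
    show "exr {x. 0 < p x} (\<lambda>y. mix_update \<theta> C i y $ r $ j)"
    proof (cases "j = i")
      case True
      have "(\<lambda>y. mix_update \<theta> C i y $ r $ j) = (\<lambda>y. inverse (sqrt (p y)) * ww \<theta> C i y $ r)"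
        by (simp add: True mix_update_eq p_def norm_vec_sqrt divide_inverse_commute)
      moreover have "exr {x. 0 < p x} (\<lambda>y. inverse (sqrt (p y)) * ww \<theta> C i y $ r)"
        by (intro exr.exr_mult exr.exr_inv exr.exr_sqrt exr_ww exr_mono[OF pe]) auto
      ultimately show ?thesis by simp
    next
      case False
      then show ?thesis by (simp add: mix_update_eq exr_entry)
    qed
  qed
qed

lemma key_inv:
  fixes a u :: "'a::real_inner"
  assumes "u \<bullet> u = 1" "a \<bullet> a < 1"
  shows "0 < - (a \<bullet> u) + sqrt ((a \<bullet> u)^2 + 1 - a \<bullet> a)"
    and "(a + (- (a \<bullet> u) + sqrt ((a \<bullet> u)^2 + 1 - a \<bullet> a)) *\<^sub>R u) \<bullet>
         (a + (- (a \<bullet> u) + sqrt ((a \<bullet> u)^2 + 1 - a \<bullet> a)) *\<^sub>R u) = 1"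
proof -
  define b where "b = a \<bullet> u"
  define q where "q = b^2 + 1 - a \<bullet> a"
  define s where "s = sqrt q"
  have q: "b^2 < q" using assms(2) by (simp add: q_def)
  have s2: "s^2 = q" using q by (simp add: s_def) (smt (verit) zero_le_power2)
  have "sqrt (b^2) < s" unfolding s_def using q by (rule real_sqrt_less_mono)
  then have "\<bar>b\<bar> < s" by simp
  then show "0 < - (a \<bullet> u) + sqrt ((a \<bullet> u)^2 + 1 - a \<bullet> a)"
    by (simp add: b_def[symmetric] q_def[symmetric] s_def[symmetric])
  have "(a + (s - b) *\<^sub>R u) \<bullet> (a + (s - b) *\<^sub>R u) = a \<bullet> a + 2 * (s - b) * b + (s - b)^2"
    by (simp add: inner_add_left inner_add_right assms(1) b_def inner_commute power2_eq_square algebra_simps)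
  also have "\<dots> = 1" using s2 by (simp add: q_def power2_eq_square algebra_simps)
  finally show "(a + (- (a \<bullet> u) + sqrt ((a \<bullet> u)^2 + 1 - a \<bullet> a)) *\<^sub>R u) \<bullet>
         (a + (- (a \<bullet> u) + sqrt ((a \<bullet> u)^2 + 1 - a \<bullet> a)) *\<^sub>R u) = 1"
    by (simp add: b_def[symmetric] q_def[symmetric] s_def[symmetric])
qed

lemma key_fwd:
  fixes a v :: "'a::real_inner"
  assumes "v \<bullet> v = 1" "a \<bullet> a < 1" "v - a \<noteq> 0"
  shows "- (a \<bullet> ((v - a) /\<^sub>R norm (v - a))) + sqrt ((a \<bullet> ((v - a) /\<^sub>R norm (v - a)))^2 + 1 - a \<bullet> a)
    = norm (v - a)"
proof -
  define w where "w = v - a"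
  define s where "s = norm w"
  define u where "u = w /\<^sub>R s"
  define c where "c = a \<bullet> u"
  have sp: "0 < s" using assms(3) by (simp add: s_def w_def)
  have wu: "w = s *\<^sub>R u" using sp by (simp add: u_def)
  have "norm u = 1" using sp by (simp add: u_def s_def)
  then have uu: "u \<bullet> u = 1" using norm_eq_1 by blast
  have "v = a + s *\<^sub>R u" using wu unfolding w_def by (metis add.commute diff_add_cancel)
  then have "1 = (a + s *\<^sub>R u) \<bullet> (a + s *\<^sub>R u)" using assms(1) by simp
  also have "\<dots> = a \<bullet> a + 2 * s * c + s^2"
    by (simp add: inner_add_left inner_add_right uu c_def inner_commute power2_eq_square algebra_simps)
  finally have eq: "1 = a \<bullet> a + 2 * s * c + s^2" .
  have nn: "0 \<le> s + c"
  proof (rule ccontr)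
    assume "\<not> 0 \<le> s + c"
    then have "s + c < 0" by simp
    have "0 < s * (2 * c + s)" using eq assms(2) by (simp add: algebra_simps power2_eq_square)
    then have "0 < 2 * c + s" using sp zero_less_mult_pos by blast
    then show False using \<open>s + c < 0\<close> sp by linarith
  qed
  have "c^2 + 1 - a \<bullet> a = (s + c)^2" using eq by (simp add: power2_eq_square algebra_simps)
  then have "sqrt (c^2 + 1 - a \<bullet> a) = s + c" using nn by simp
  then show ?thesis by (simp add: c_def[symmetric] u_def[symmetric] s_def[symmetric] w_def[symmetric])
qed

lemma aa_inner_lt:
  fixes C :: "real^'n^'n" and V :: "real^'n^'k"
  assumes "0 < \<theta>" "\<theta> * Max (range (col_norm1 C)) < 1" "V \<in> sphere_prod"
  shows "aa \<theta> C i V \<bullet> aa \<theta> C i V < 1"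
proof -
  have "norm (aa \<theta> C i V) < 1" by (rule aa_norm[OF assms])
  then have "(norm (aa \<theta> C i V))^2 < 1"
    by (metis abs_norm_cancel abs_square_less_1)
  then show ?thesis by (simp add: power2_norm_eq_inner)
qed

lemma col_inner1: "V \<in> sphere_prod \<Longrightarrow> col V i \<bullet> col V i = 1"
  by (simp add: sphere_prod_def norm_eq_1[symmetric])

lemma inv_in:
  fixes C :: "real^'n^'n" and V :: "real^'n^'k"
  assumes "0 < \<theta>" "\<theta> * Max (range (col_norm1 C)) < 1" "V \<in> sphere_prod"
  shows "invstep \<theta> C i V \<in> sphere_prod"
  unfolding invstep_def
  by (rule in_sphere_set_col[OF assms(3)])
    (use key_inv(2)[OF col_inner1[OF assms(3)] aa_inner_lt[OF assms]] in \<open>simp add: tt_def norm_eq_1\<close>)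

lemma inv_mix:
  fixes C :: "real^'n^'n" and V :: "real^'n^'k"
  assumes "0 < \<theta>" "\<theta> * Max (range (col_norm1 C)) < 1" "V \<in> sphere_prod" "C $ i $ i = 0"
  shows "invstep \<theta> C i (mix_update \<theta> C i V) = V"
proof -
  define a where "a = aa \<theta> C i V"
  define w where "w = ww \<theta> C i V"
  have w: "w = col V i - a" by (simp add: w_def a_def ww_def)
  have wn: "col V i - a \<noteq> 0" using ww_nonzero[OF assms(1-3), of i] w w_def by metis
  define u where "u = w /\<^sub>R norm w"
  have k: "- (a \<bullet> u) + sqrt ((a \<bullet> u)^2 + 1 - a \<bullet> a) = norm w"
    unfolding w u_def by (rule key_fwd[OF col_inner1[OF assms(3)] _ wn]) (use aa_inner_lt[OF assms(1-3)] a_def in simp)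
  have wne: "w \<noteq> 0" using wn w by simp
  have "invstep \<theta> C i (set_col V i u) = set_col V i (a + (- (a \<bullet> u) + sqrt ((a \<bullet> u)^2 + 1 - a \<bullet> a)) *\<^sub>R u)"
    unfolding invstep_def tt_def aa_set_col[OF assms(4)] col_set_col
    by (simp add: a_def[symmetric])
  also have "\<dots> = set_col V i (a + norm w *\<^sub>R u)" by (simp only: k)
  also have "\<dots> = set_col V i (col V i)" using wne w by (simp add: u_def)
  finally show ?thesis by (simp add: mix_update_eq w_def u_def)
qed

lemma mix_inv:
  fixes C :: "real^'n^'n" and V :: "real^'n^'k"
  assumes "0 < \<theta>" "\<theta> * Max (range (col_norm1 C)) < 1" "V \<in> sphere_prod" "C $ i $ i = 0"
  shows "mix_update \<theta> C i (invstep \<theta> C i V) = V"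
proof -
  define a where "a = aa \<theta> C i V"
  define t where "t = tt \<theta> C i V"
  define u where "u = col V i"
  have tp: "0 < t" using key_inv(1)[OF col_inner1[OF assms(3)] aa_inner_lt[OF assms(1-3)]]
    by (simp add: t_def tt_def)
  have nu: "norm u = 1" using assms(3) by (simp add: u_def sphere_prod_def)
  have "ww \<theta> C i (invstep \<theta> C i V) = t *\<^sub>R u"
    unfolding ww_def invstep_def aa_set_col[OF assms(4)] col_set_col
    by (simp add: a_def[symmetric] t_def[symmetric] u_def[symmetric])
  moreover have "(t *\<^sub>R u) /\<^sub>R norm (t *\<^sub>R u) = u" using tp nu by simp
  ultimately show ?thesis
    by (simp add: mix_update_eq invstep_def u_def)
qed

lemma SG_inv:
  fixes C :: "real^'n^'n"
  assumes "0 < \<theta>" "\<theta> * Max (range (col_norm1 C)) < 1"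
  shows "SG (sphere_prod :: (real^'n^'k) set) (invstep \<theta> C i)"
  unfolding SG_def
proof (intro exI conjI)
  define b where "b = (\<lambda>V::real^'n^'k. \<Sum>r\<in>UNIV. aa \<theta> C i V $ r * V $ r $ i)"
  define p where "p = (\<lambda>V::real^'n^'k. b V * b V + 1 - (\<Sum>r\<in>UNIV. aa \<theta> C i V $ r * aa \<theta> C i V $ r))"
  have be: "exr U b" for U unfolding b_def by (intro exr_sum exr.exr_mult exr_aa exr_entry) auto
  show pe: "exr UNIV p" unfolding p_def
    by (intro exr_diff exr.exr_add exr.exr_mult be exr.exr_const exr_sum exr_aa) auto
  have pv: "p V = (aa \<theta> C i V \<bullet> col V i)^2 + 1 - aa \<theta> C i V \<bullet> aa \<theta> C i V" for V
    by (simp add: p_def b_def inner_vec_def power2_eq_square)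
  have tv: "tt \<theta> C i V = - b V + sqrt (p V)" for V
    by (simp add: tt_def pv b_def inner_vec_def)
  show "\<forall>x\<in>sphere_prod. 0 < p x"
  proof
    fix V :: "real^'n^'k" assume V: "V \<in> sphere_prod"
    show "0 < p V" unfolding pv using aa_inner_lt[OF assms V, of i]
      by (smt (verit) zero_le_power2)
  qed
  show "\<forall>b\<in>Basis. exr {x. 0 < p x} (\<lambda>y. invstep \<theta> C i y \<bullet> b)"
  proof (rule vec_comp_exr)
    fix r j
    show "exr {x. 0 < p x} (\<lambda>y. invstep \<theta> C i y $ r $ j)"
    proof (cases "j = i")
      case True
      have "(\<lambda>y. invstep \<theta> C i y $ r $ j) = (\<lambda>y. aa \<theta> C i y $ r + (- b y + sqrt (p y)) * y $ r $ i)"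
        by (simp add: True invstep_def tv)
      moreover have "exr {x. 0 < p x} (\<lambda>y. aa \<theta> C i y $ r + (- b y + sqrt (p y)) * y $ r $ i)"
        by (intro exr.exr_add exr.exr_mult exr.exr_sqrt exr_aa exr_entry exr_mono[OF pe])
          (auto intro: exr_cmult[of _ b "-1", simplified] be)
      ultimately show ?thesis by simp
    next
      case False
      then show ?thesis by (simp add: invstep_def exr_entry)
    qed
  qed
qed


theorem lemma14:
  fixes C :: "real^('n::{finite,linorder})^('n::{finite,linorder})" and \<theta> :: real
  assumes "transpose C = C"
    and "\<forall>i. C $ i $ i = 0"
    and "0 < \<theta>"
    and "\<theta> * Max (range (col_norm1 C)) < 1"
  shows "diffeomorphism_on (sphere_prod :: (real^('n::{finite,linorder})^'k) set) (mixing \<theta> C)"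
proof -
  define S where "S = (sphere_prod :: (real^('n::{finite,linorder})^'k) set)"
  define L where "L = sorted_list_of_set (UNIV::('n::{finite,linorder}) set)"
  define G where "G = (\<lambda>V::real^('n::{finite,linorder})^'k. fold (invstep \<theta> C) (rev L) V)"
  have mx: "mixing \<theta> C = (\<lambda>V::real^('n::{finite,linorder})^'k. fold (mix_update \<theta> C) L V)"
    by (simp add: mixing_def L_def fun_eq_iff)
  have fS: "\<And>i. mix_update \<theta> C i ` S \<subseteq> S" using mix_in[OF assms(3,4)] by (auto simp: S_def)
  have gS: "\<And>i. invstep \<theta> C i ` S \<subseteq> S" using inv_in[OF assms(3,4)] by (auto simp: S_def)
  have fSG: "\<And>i. SG S (mix_update \<theta> C i)" unfolding S_def by (rule SG_mix[OF assms(3,4)])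
  have gSG: "\<And>i. SG S (invstep \<theta> C i)" unfolding S_def by (rule SG_inv[OF assms(3,4)])
  have id: "x \<in> S \<Longrightarrow> G (mixing \<theta> C x) = x \<and> mixing \<theta> C (G x) = x" for x
    unfolding mx G_def
    by (rule fold_inv[OF fS gS]) (use inv_mix[OF assms(3,4)] mix_inv[OF assms(3,4)] assms(2) in \<open>auto simp: S_def\<close>)
  have LP1: "LP S (mixing \<theta> C)" and M1: "mixing \<theta> C ` S \<subseteq> S"
    using LP_fold[OF fSG fS LP_id, where xs=L] by (auto simp: mx)
  have LP2: "LP S G" and M2: "G ` S \<subseteq> S"
    using LP_fold[OF gSG gS LP_id, where xs="rev L"] by (auto simp: G_def)
  have bij: "bij_betw (mixing \<theta> C) S S"
    by (rule bij_betw_byWitness[of S G]) (use id M1 M2 in auto)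
  have inv: "\<forall>y\<in>S. inv_into S (mixing \<theta> C) y = G y"
  proof
    fix y assume y: "y \<in> S"
    show "inv_into S (mixing \<theta> C) y = G y"
      by (rule inv_into_f_eq[OF bij_betw_imp_inj_on[OF bij]]) (use y M2 id in auto)
  qed
  have "diffeomorphism_on S (mixing \<theta> C)"
    unfolding diffeomorphism_on_def
    using bij LP_smooth_map[OF LP1] LP_smooth_map[OF LP2 inv] by simp
  then show ?thesis by (simp add: S_def)
qed

end
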